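(* The tuple $(p,\sqrt{1-p^2})$ is not simulable.
   Context: Let $p\in[0,1]$ be an unknown parameter and let $|p\rangle=\sqrt{p}|0\rangle+\sqrt{1-p}|1\rangle$. For a complex function $h(p)$ write $|f_h\rangle=\frac{1}{\sqrt{1+|h(p)|^2}}(h(p)|0\rangle+|1\rangle)$. A tuple $(k_0(p),k_1(p))$ of complex functions with $|k_0|^2+|k_1|^2=1$ is called simulable if, starting from an unbounded supply of copies of $|p\rangle$, one can produce the single-qubit state $|f_{k_0/k_1}\rangle=k_0(p)|0\rangle+k_1(p)|1\rangle$ (up to a global phase) in finitely many steps with nonzero success probability, where each step applies a unitary transformation or a measurement (in the computational basis) to the current state together with auxiliary qubits; the operations may not depend on $p$. Auxiliary qubits may be other simulable states or constant states $|a_c\rangle=\frac{1}{\sqrt{|a|^2+1}}(a|0\rangle+|1\rangle)$ with $a\in\mathbb{C}$ a constant independent of $p$. *)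

theory Defs
  imports Complex_Main
begin

text \<open>Multi-qubit states: an n-qubit (unnormalised) state depending on the parameter p is a
function  real => bool list => complex ; only the values at bit lists of length n matter
(False = |0>, True = |1>, the first list entry is the first qubit).\<close>

type_synonym pstate = "real \<Rightarrow> bool list \<Rightarrow> complex"

definition bitlists :: "nat \<Rightarrow> bool list set" where
  "bitlists n = {xs. length xs = n}"

definition qubit :: "complex \<Rightarrow> complex \<Rightarrow> bool list \<Rightarrow> complex" where
  "qubit a0 a1 = (\<lambda>xs. if xs = [False] then a0 else if xs = [True] then a1 else 0)"

definition pstate_in :: pstate where
  "pstate_in = (\<lambda>p. qubit (complex_of_real (sqrt p)) (complex_of_real (sqrt (1 - p))))"

definition const_state :: "complex \<Rightarrow> pstate" where
  "const_state a = (\<lambda>p. qubit (a / complex_of_real (sqrt ((cmod a)\<^sup>2 + 1)))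
                                 (1 / complex_of_real (sqrt ((cmod a)\<^sup>2 + 1))))"

definition unitary_on :: "nat \<Rightarrow> (bool list \<Rightarrow> bool list \<Rightarrow> complex) \<Rightarrow> bool" where
  "unitary_on n U \<longleftrightarrow> (\<forall>x\<in>bitlists n. \<forall>y\<in>bitlists n.
      (\<Sum>z\<in>bitlists n. cnj (U z x) * U z y) = (if x = y then 1 else 0))"

text \<open>reach n psi: the (unnormalised, post-selected) n-qubit state psi can be obtained along
  one branch of a finite protocol: start from the empty register; append auxiliary qubits
  (copies of |p>, constant states, or already simulable states); apply p-independent
  unitaries; measure a qubit in the computational basis and keep the branch with outcome b
  (the measured qubit is discarded).  simulable k0 k1: some protocol ends in a single qubit
  whose state is nonzero (nonzero success probability) and proportional to k0|0>+k1|1>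
  (i.e. equal to it up to a global phase after normalisation), for every p in [0,1].\<close>
inductive reach :: "nat \<Rightarrow> pstate \<Rightarrow> bool"
  and simulable :: "(real \<Rightarrow> complex) \<Rightarrow> (real \<Rightarrow> complex) \<Rightarrow> bool"
where
  empty: "reach 0 (\<lambda>p xs. if xs = [] then 1 else 0)"
| add_input: "reach n \<psi> \<Longrightarrow>
     reach (Suc n) (\<lambda>p xs. \<psi> p (take n xs) * pstate_in p (drop n xs))"
| add_const: "reach n \<psi> \<Longrightarrow>
     reach (Suc n) (\<lambda>p xs. \<psi> p (take n xs) * const_state a p (drop n xs))"
| add_sim: "reach n \<psi> \<Longrightarrow> simulable k0 k1 \<Longrightarrow>
     reach (Suc n) (\<lambda>p xs. \<psi> p (take n xs) * qubit (k0 p) (k1 p) (drop n xs))"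
| apply_unitary: "reach n \<psi> \<Longrightarrow> unitary_on n U \<Longrightarrow>
     reach n (\<lambda>p x. \<Sum>y\<in>bitlists n. U x y * \<psi> p y)"
| measure: "reach (Suc n) \<psi> \<Longrightarrow> i \<le> n \<Longrightarrow>
     reach n (\<lambda>p xs. \<psi> p (take i xs @ b # drop i xs))"
| sim: "(\<forall>p\<in>{0..1}. (cmod (k0 p))\<^sup>2 + (cmod (k1 p))\<^sup>2 = 1) \<Longrightarrow>
     reach 1 \<psi> \<Longrightarrow>
     (\<forall>p\<in>{0..1}. (\<psi> p [False] \<noteq> 0 \<or> \<psi> p [True] \<noteq> 0) \<and>
                   \<psi> p [False] * k1 p = \<psi> p [True] * k0 p) \<Longrightarrow>
     simulable k0 k1"

end

theory Submission imports Defs "HOL-Complex_Analysis.Complex_Analysis" begin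

inductive_set trigp :: "(complex \<Rightarrow> complex) set" where
  tconst: "(\<lambda>z. c) \<in> trigp"
| tsin: "(\<lambda>z. sin z) \<in> trigp"
| tcos: "(\<lambda>z. cos z) \<in> trigp"
| tadd: "f \<in> trigp \<Longrightarrow> g \<in> trigp \<Longrightarrow> (\<lambda>z. f z + g z) \<in> trigp"
| tmult: "f \<in> trigp \<Longrightarrow> g \<in> trigp \<Longrightarrow> (\<lambda>z. f z * g z) \<in> trigp"

lemma trigp_holo: "f \<in> trigp \<Longrightarrow> f holomorphic_on UNIV"
  by (induction rule: trigp.induct) (auto intro!: holomorphic_intros)

lemma trigp_sum_fin: "finite A \<Longrightarrow> (\<forall>y\<in>A. f y \<in> trigp) \<longrightarrow> (\<lambda>z. \<Sum>y\<in>A. f y z) \<in> trigp"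
proof (induction A rule: finite_induct)
  case empty
  then show ?case using tconst[of 0] by simp
next
  case (insert x F)
  then show ?case using tadd[of "f x" "\<lambda>z. \<Sum>y\<in>F. f y z"] by simp
qed

lemma trigp_sum: "(\<And>y. y \<in> A \<Longrightarrow> f y \<in> trigp) \<Longrightarrow> (\<lambda>z. \<Sum>y\<in>A. f y z) \<in> trigp"
  using trigp_sum_fin[of A f] tconst[of 0] by (cases "finite A") auto

lemma trigp_qubit: "f \<in> trigp \<Longrightarrow> g \<in> trigp \<Longrightarrow> (\<lambda>z. qubit (f z) (g z) ys) \<in> trigp"
  unfolding qubit_def using tconst[of 0] by (cases "ys = [False]"; cases "ys = [True]") auto

definition P1 :: "nat \<Rightarrow> pstate \<Rightarrow> bool" where
  "P1 n \<psi> \<longleftrightarrow> (\<exists>c G. (\<forall>x. G x \<in> trigp) \<and> (\<forall>\<theta>::real. 0 \<le> \<theta> \<and> \<theta> \<le> pi/2 \<longrightarrow>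
      (\<forall>x. \<psi> ((sin \<theta>)^2) x = c \<theta> * G x (of_real \<theta>))))"

definition P2 :: "(real \<Rightarrow> complex) \<Rightarrow> (real \<Rightarrow> complex) \<Rightarrow> bool" where
  "P2 k0 k1 \<longleftrightarrow> (\<exists>c G0 G1. G0 \<in> trigp \<and> G1 \<in> trigp \<and> (\<forall>\<theta>::real. 0 \<le> \<theta> \<and> \<theta> \<le> pi/2 \<longrightarrow>
      k0 ((sin \<theta>)^2) = c \<theta> * G0 (of_real \<theta>) \<and> k1 ((sin \<theta>)^2) = c \<theta> * G1 (of_real \<theta>)))"

lemma pin: assumes "0 \<le> \<theta>" "\<theta> \<le> pi/2"
  shows "pstate_in ((sin \<theta>)^2) ys = qubit (sin (of_real \<theta>)) (cos (of_real \<theta>)) ys"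
proof -
  have "sin \<theta> \<ge> 0" using assms by (intro sin_ge_zero) auto
  moreover have "cos \<theta> \<ge> 0" using assms by (intro cos_ge_zero) auto
  moreover have "1 - (sin \<theta>)^2 = (cos \<theta>)^2" by (simp add: cos_squared_eq)
  ultimately show ?thesis unfolding pstate_in_def by (simp add: sin_of_real cos_of_real)
qed

lemma invariant: "(reach n \<psi> \<longrightarrow> P1 n \<psi>) \<and> (simulable k0 k1 \<longrightarrow> P2 k0 k1)"
proof (induction rule: reach_simulable.induct)
  case empty
  show ?case unfolding P1_def
    by (rule exI[of _ "\<lambda>_. 1"], rule exI[of _ "\<lambda>x z. if x = [] then 1 else 0"]) (auto intro: tconst)
next
  case (add_input n \<psi>)
  then obtain c G where G: "\<forall>x. G x \<in> trigp" and e: "\<forall>\<theta>::real. 0 \<le> \<theta> \<and> \<theta> \<le> pi/2 \<longrightarrow>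
      (\<forall>x. \<psi> ((sin \<theta>)^2) x = c \<theta> * G x (of_real \<theta>))" unfolding P1_def by blast
  show ?case unfolding P1_def
    apply (rule exI[of _ c], rule exI[of _ "\<lambda>x z. G (take n x) z * qubit (sin z) (cos z) (drop n x)"])
    using G e pin by (auto intro!: tmult trigp_qubit tsin tcos)
next
  case (add_const n \<psi> a)
  then obtain c G where G: "\<forall>x. G x \<in> trigp" and e: "\<forall>\<theta>::real. 0 \<le> \<theta> \<and> \<theta> \<le> pi/2 \<longrightarrow>
      (\<forall>x. \<psi> ((sin \<theta>)^2) x = c \<theta> * G x (of_real \<theta>))" unfolding P1_def by blast
  show ?case unfolding P1_def
    apply (rule exI[of _ c], rule exI[of _ "\<lambda>x z. G (take n x) z * const_state a 0 (drop n x)"])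
    using G e by (auto intro!: tmult tconst simp: const_state_def trigp_qubit)
next
  case (add_sim n \<psi> k0 k1)
  then obtain c G where G: "\<forall>x. G x \<in> trigp" and e: "\<forall>\<theta>::real. 0 \<le> \<theta> \<and> \<theta> \<le> pi/2 \<longrightarrow>
      (\<forall>x. \<psi> ((sin \<theta>)^2) x = c \<theta> * G x (of_real \<theta>))" unfolding P1_def by blast
  from add_sim obtain d G0 G1 where G01: "G0 \<in> trigp" "G1 \<in> trigp" and e2: "\<forall>\<theta>::real. 0 \<le> \<theta> \<and> \<theta> \<le> pi/2 \<longrightarrow>
      k0 ((sin \<theta>)^2) = d \<theta> * G0 (of_real \<theta>) \<and> k1 ((sin \<theta>)^2) = d \<theta> * G1 (of_real \<theta>)"
    unfolding P2_def by blast
  have q: "qubit (d t * a) (d t * b) ys = d t * qubit a b ys" for t a b ys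
    unfolding qubit_def by auto
  show ?case unfolding P1_def
    apply (rule exI[of _ "\<lambda>t. c t * d t"], rule exI[of _ "\<lambda>x z. G (take n x) z * qubit (G0 z) (G1 z) (drop n x)"])
    using G e e2 G01 q by (auto intro!: tmult trigp_qubit)
next
  case (apply_unitary n \<psi> U)
  then obtain c G where G: "\<forall>x. G x \<in> trigp" and e: "\<forall>\<theta>::real. 0 \<le> \<theta> \<and> \<theta> \<le> pi/2 \<longrightarrow>
      (\<forall>x. \<psi> ((sin \<theta>)^2) x = c \<theta> * G x (of_real \<theta>))" unfolding P1_def by blast
  show ?case unfolding P1_def
    apply (rule exI[of _ c], rule exI[of _ "\<lambda>x z. \<Sum>y\<in>bitlists n. U x y * G y z"])
    using G e by (auto intro!: trigp_sum tmult tconst simp: sum_distrib_left mult.left_commute)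
next
  case (measure n \<psi> i b)
  then obtain c G where G: "\<forall>x. G x \<in> trigp" and e: "\<forall>\<theta>::real. 0 \<le> \<theta> \<and> \<theta> \<le> pi/2 \<longrightarrow>
      (\<forall>x. \<psi> ((sin \<theta>)^2) x = c \<theta> * G x (of_real \<theta>))" unfolding P1_def by blast
  show ?case unfolding P1_def
    apply (rule exI[of _ c], rule exI[of _ "\<lambda>x. G (take i x @ b # drop i x)"])
    using G e by auto
next
  case (sim k0 k1 \<psi>)
  then obtain c G where G: "\<forall>x. G x \<in> trigp" and e: "\<forall>\<theta>::real. 0 \<le> \<theta> \<and> \<theta> \<le> pi/2 \<longrightarrow>
      (\<forall>x. \<psi> ((sin \<theta>)^2) x = c \<theta> * G x (of_real \<theta>))" unfolding P1_def by blast
  define \<mu> where "\<mu> = (\<lambda>t. if \<psi> ((sin t)^2) [False] \<noteq> 0 then k0 ((sin t)^2) / \<psi> ((sin t)^2) [False]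
     else k1 ((sin t)^2) / \<psi> ((sin t)^2) [True])"
  have key: "k0 ((sin t)^2) = \<mu> t * \<psi> ((sin t)^2) [False] \<and> k1 ((sin t)^2) = \<mu> t * \<psi> ((sin t)^2) [True]" for t
  proof -
    have "(sin t)^2 \<in> {0..1}" by (simp add: abs_square_le_1)
    then have h: "\<psi> ((sin t)^2) [False] \<noteq> 0 \<or> \<psi> ((sin t)^2) [True] \<noteq> 0"
      "\<psi> ((sin t)^2) [False] * k1 ((sin t)^2) = \<psi> ((sin t)^2) [True] * k0 ((sin t)^2)"
      using sim.hyps(3) by blast+
    show ?thesis
    proof (cases "\<psi> ((sin t)^2) [False] \<noteq> 0")
      case True
      then show ?thesis using h unfolding \<mu>_def by (simp add: field_simps)
    next
      case False
      then show ?thesis using h unfolding \<mu>_def by (simp add: field_simps)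
    qed
  qed
  show ?case unfolding P2_def
    apply (rule exI[of _ "\<lambda>t. \<mu> t * c t"], rule exI[of _ "G [False]"], rule exI[of _ "G [True]"])
    using G e key by auto
qed


lemma cont_eq:
  fixes A B :: "complex \<Rightarrow> complex"
  assumes "isCont A z0" "isCont B z0" "r > 0" "\<And>w. w \<in> ball z0 r \<Longrightarrow> w \<noteq> z0 \<Longrightarrow> A w = B w"
  shows "A z0 = B z0"
proof -
  have ev: "eventually (\<lambda>w. A w = B w) (at z0)"
    using assms(3,4) unfolding eventually_at by (metis dist_commute mem_ball)
  have "(B \<longlongrightarrow> A z0) (at z0)"
    using assms(1) ev tendsto_cong unfolding isCont_def by blast
  moreover have "(B \<longlongrightarrow> B z0) (at z0)" using assms(2) unfolding isCont_def by blast
  ultimately show ?thesis using tendsto_unique by (metis at_neq_bot)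
qed

lemma no_entire:
  assumes G0: "G0 holomorphic_on UNIV" and G1: "G1 holomorphic_on UNIV"
    and eq: "\<And>w. sin w ^ 4 * G1 w ^ 2 = (1 - sin w ^ 4) * G0 w ^ 2"
    and nz0: "\<exists>w. G0 w \<noteq> 0" and nz1: "\<exists>w. G1 w \<noteq> 0"
  shows False
proof -
  define z0 where "z0 = Arcsin \<i>"
  have s0: "sin z0 = \<i>" unfolding z0_def by simp
  have c0: "cos z0 ^ 2 = 2"
  proof -
    have "sin z0 ^ 2 + cos z0 ^ 2 = 1" by (rule sin_cos_squared_add)
    then show ?thesis using s0 by (simp add: power2_eq_square)
  qed
  then have cnz: "cos z0 \<noteq> 0" by auto
  define q where "q = (\<lambda>w::complex. 1 - sin w ^ 4)"
  have qz: "q z0 = 0" unfolding q_def using s0 by (simp add: power4_eq_xxxx)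
  have qd: "(q has_field_derivative (- (4 * sin z0 ^ 3 * cos z0))) (at z0)"
    unfolding q_def by (auto intro!: derivative_eq_intros simp: algebra_simps)
  have "deriv q z0 = - (4 * sin z0 ^ 3 * cos z0)" using qd DERIV_imp_deriv by blast
  then have dq: "(deriv ^^ 1) q z0 \<noteq> 0" using s0 cnz by (simp add: power3_eq_cube)
  have qh: "q holomorphic_on UNIV" unfolding q_def by (auto intro!: holomorphic_intros)
  obtain \<rho> r1 where r1: "0 < r1" "\<rho> holomorphic_on ball z0 r1"
      "\<And>w. w \<in> ball z0 r1 \<Longrightarrow> q w - q z0 = (w - z0)^1 * \<rho> w"
      "\<And>w. w \<in> ball z0 r1 \<Longrightarrow> \<rho> w \<noteq> 0"
    by (rule holomorphic_factor_order_of_zero[OF qh open_UNIV UNIV_I zero_less_one dq]) auto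
  obtain g r2 where r2: "r2 > 0" "g holomorphic_on cball z0 r2"
     "\<forall>w\<in>cball z0 r2. G0 w = g w * (w - z0) ^ nat (zorder G0 z0) \<and> g w \<noteq> 0"
    using zorder_exist_zero[OF G0 open_UNIV connected_UNIV, of z0] nz0 by auto
  obtain h r3 where r3: "r3 > 0" "h holomorphic_on cball z0 r3"
     "\<forall>w\<in>cball z0 r3. G1 w = h w * (w - z0) ^ nat (zorder G1 z0) \<and> h w \<noteq> 0"
    using zorder_exist_zero[OF G1 open_UNIV connected_UNIV, of z0] nz1 by auto
  define N where "N = nat (zorder G0 z0)"
  define M where "M = nat (zorder G1 z0)"
  define R where "R = min r1 (min r2 r3)"
  have R: "R > 0" using r1 r2 r3 unfolding R_def by auto
  have cg: "isCont g z0"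
    using r2 holomorphic_on_imp_continuous_on continuous_on_interior by fastforce
  have ch: "isCont h z0"
    using r3 holomorphic_on_imp_continuous_on continuous_on_interior by fastforce
  have c\<rho>: "isCont \<rho> z0"
    using r1 holomorphic_on_imp_continuous_on continuous_on_interior by fastforce
  have E: "sin w ^ 4 * h w ^ 2 * (w - z0) ^ (2*M) = (w - z0) ^ (2*N+1) * (\<rho> w * g w ^ 2)"
    if "w \<in> ball z0 R" for w
  proof -
    have "w \<in> ball z0 r1" "w \<in> cball z0 r2" "w \<in> cball z0 r3" using that unfolding R_def by auto
    then have "q w = (w - z0) * \<rho> w" "G0 w = g w * (w - z0) ^ N" "G1 w = h w * (w - z0) ^ M"
      using r1 r2 r3 qz unfolding N_def M_def by auto
    then have qq: "1 - sin w ^ 4 = (w - z0) * \<rho> w" and gg: "G0 w = g w * (w - z0) ^ N"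
      and hh: "G1 w = h w * (w - z0) ^ M" unfolding q_def by auto
    have "sin w ^ 4 * h w ^ 2 * (w - z0) ^ (2*M) = sin w ^ 4 * G1 w ^ 2"
      unfolding hh by (simp add: power_mult_distrib power_even_eq)
    also have "\<dots> = (1 - sin w ^ 4) * G0 w ^ 2" by (rule eq)
    also have "\<dots> = (w - z0) ^ (2*N+1) * (\<rho> w * g w ^ 2)"
      unfolding qq gg by (simp add: power_mult_distrib power_even_eq ac_simps power_mult)
    finally show ?thesis .
  qed
  show False
  proof (cases "M \<le> N")
    case True
    define k where "k = 2*(N-M)+1"
    have "sin w ^ 4 * h w ^ 2 = (w - z0) ^ k * (\<rho> w * g w ^ 2)"
      if "w \<in> ball z0 R" "w \<noteq> z0" for w
    proof -
      have "2*N+1 = 2*M + k" unfolding k_def using True by simp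
      then have "sin w ^ 4 * h w ^ 2 * (w - z0) ^ (2*M) = ((w - z0) ^ k * (\<rho> w * g w ^ 2)) * (w - z0) ^ (2*M)"
        using E[OF that(1)] by (simp add: power_add algebra_simps)
      then show ?thesis using that(2) by simp
    qed
    note X = this
    have "sin z0 ^ 4 * h z0 ^ 2 = (z0 - z0) ^ k * (\<rho> z0 * g z0 ^ 2)"
      apply (rule cont_eq[where A="\<lambda>w. sin w ^ 4 * h w ^ 2" and B="\<lambda>w. (w - z0) ^ k * (\<rho> w * g w ^ 2)", OF _ _ R])
        apply (intro continuous_intros cg ch c\<rho>)
       apply (intro continuous_intros cg ch c\<rho>)
      by (rule X)
    moreover have "h z0 \<noteq> 0" using r3 by auto
    ultimately show False using s0 unfolding k_def by (simp add: power4_eq_xxxx)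
  next
    case False
    define k where "k = 2*(M-N)-1"
    have "sin w ^ 4 * h w ^ 2 * (w - z0) ^ k = (\<rho> w * g w ^ 2)"
      if "w \<in> ball z0 R" "w \<noteq> z0" for w
    proof -
      have "2*M = 2*N + 1 + k" unfolding k_def using False by simp
      then have "(sin w ^ 4 * h w ^ 2 * (w - z0) ^ k) * (w - z0) ^ (2*N+1) = (\<rho> w * g w ^ 2) * (w - z0) ^ (2*N+1)"
        using E[OF that(1)] by (simp add: power_add algebra_simps)
      then show ?thesis using that(2) by simp
    qed
    note X = this
    have "sin z0 ^ 4 * h z0 ^ 2 * (z0 - z0) ^ k = \<rho> z0 * g z0 ^ 2"
      apply (rule cont_eq[where A="\<lambda>w. sin w ^ 4 * h w ^ 2 * (w - z0) ^ k" and B="\<lambda>w. \<rho> w * g w ^ 2", OF _ _ R])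
        apply (intro continuous_intros cg ch c\<rho>)
       apply (intro continuous_intros cg ch c\<rho>)
      by (rule X)
    moreover have "g z0 \<noteq> 0" using r2 by auto
    moreover have "\<rho> z0 \<noteq> 0" using r1 by auto
    moreover have "k > 0" unfolding k_def using False by simp
    ultimately show False by (simp add: zero_power)
  qed
qed


lemma real_step:
  fixes s :: real and c a b :: complex
  assumes "s \<noteq> 0" "s^2 \<le> 1" "of_real (s^2) = c * a" "of_real (sqrt (1 - (s^2)^2)) = c * b"
  shows "(of_real s)^4 * b^2 = (1 - (of_real s)^4) * a^2"
proof -
  have c: "c \<noteq> 0" using assms(1,3) by auto
  have "c * (of_real (s^2) * b) = c * (of_real (sqrt (1 - (s^2)^2)) * a)"
    using assms(3,4) by (simp add: ac_simps)
  then have e: "of_real (s^2) * b = of_real (sqrt (1 - (s^2)^2)) * a" using c by simp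
  have "(s^2)^2 \<le> 1" using assms(2) power_le_one[of "s^2" 2] by (simp del: power_mult add: power_mult[symmetric])
  then have sq: "(sqrt (1 - (s^2)^2))^2 = 1 - (s^2)^2" by simp
  have "(of_real (s^2) * b)^2 = (of_real (sqrt (1 - (s^2)^2)) * a)^2" using e by simp
  then have "(of_real (s^2))^2 * b^2 = (of_real ((sqrt (1 - (s^2)^2))^2)) * a^2"
    by (simp add: power_mult_distrib)
  then show ?thesis unfolding sq by (simp add: power_mult[symmetric])
qed

theorem mainTheorem3:
  shows "\<not> simulable (\<lambda>p. complex_of_real p) (\<lambda>p. complex_of_real (sqrt (1 - p\<^sup>2)))"
proof
  assume "simulable (\<lambda>p. complex_of_real p) (\<lambda>p. complex_of_real (sqrt (1 - p\<^sup>2)))"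
  then obtain c G0 G1 where G: "G0 \<in> trigp" "G1 \<in> trigp" and e: "\<And>\<theta>::real. 0 \<le> \<theta> \<Longrightarrow> \<theta> \<le> pi/2 \<Longrightarrow>
      of_real ((sin \<theta>)^2) = c \<theta> * G0 (of_real \<theta>) \<and> of_real (sqrt (1 - ((sin \<theta>)^2)^2)) = c \<theta> * G1 (of_real \<theta>)"
    using invariant unfolding P2_def by blast
  have h0: "G0 holomorphic_on UNIV" "G1 holomorphic_on UNIV" using G trigp_holo by auto
  define F where "F = (\<lambda>w. sin w ^ 4 * G1 w ^ 2 - (1 - sin w ^ 4) * G0 w ^ 2)"
  have Fh: "F holomorphic_on UNIV" unfolding F_def using h0 by (auto intro!: holomorphic_intros)
  have F0: "F z = 0" if zin: "z \<in> of_real ` {pi/8..pi/2}" for z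
  proof -
    obtain \<theta> where th: "z = of_real \<theta>" "pi/8 \<le> \<theta>" "\<theta> \<le> pi/2" using zin by auto
    have pos: "0 < \<theta>" "\<theta> < pi" using th pi_gt_zero by linarith+
    have "sin \<theta> \<noteq> 0" using sin_gt_zero[OF pos] by simp
    moreover have "(sin \<theta>)^2 \<le> 1" by (simp add: abs_square_le_1)
    ultimately have "(of_real (sin \<theta>))^4 * G1 z^2 = (1 - (of_real (sin \<theta>))^4) * G0 z^2"
      using e[of \<theta>] th pos by (intro real_step) auto
    then show ?thesis unfolding F_def th by (simp add: sin_of_real)
  qed
  have lim: "of_real (pi/4) islimpt (of_real ` {pi/8..pi/2} :: complex set)"
    unfolding islimpt_approachable
  proof (intro allI impI)
    fix e :: real assume "0 < e"
    define d where "d = min (e/2) (pi/8)"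
    have d: "0 < d" "d < e" "d \<le> pi/8" using \<open>0 < e\<close> pi_gt_zero unfolding d_def by auto
    have dd: "dist (complex_of_real (pi/4 + d)) (complex_of_real (pi/4)) = d"
      using d by (simp add: dist_norm)
    show "\<exists>x'\<in>of_real ` {pi/8..pi/2}. x' \<noteq> complex_of_real (pi/4) \<and> dist x' (complex_of_real (pi/4)) < e"
    proof (rule bexI[of _ "complex_of_real (pi/4 + d)"])
      have "complex_of_real (pi/4 + d) \<noteq> complex_of_real (pi/4)"
        unfolding of_real_eq_iff using d by simp
      then show "complex_of_real (pi/4 + d) \<noteq> complex_of_real (pi/4) \<and>
          dist (complex_of_real (pi/4 + d)) (complex_of_real (pi/4)) < e" using dd d by simp
      show "complex_of_real (pi/4 + d) \<in> of_real ` {pi/8..pi/2}" using d pi_gt_zero by (intro imageI) auto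
    qed
  qed
  have Fz: "\<And>w. F w = 0"
    using analytic_continuation[OF Fh open_UNIV connected_UNIV subset_UNIV UNIV_I lim F0] by blast
  have s4: "sin (pi/4) ^ 2 = (1/2::real)" by (simp add: sin_45 power_divide)
  have nz: "G0 (of_real (pi/4)) \<noteq> 0 \<and> G1 (of_real (pi/4)) \<noteq> 0"
  proof -
    have a: "of_real ((sin (pi/4))^2) = c (pi/4) * G0 (of_real (pi/4))"
      and b: "of_real (sqrt (1 - ((sin (pi/4))^2)^2)) = c (pi/4) * G1 (of_real (pi/4))"
      using e[of "pi/4"] pi_gt_zero by auto
    have "sqrt (1 - ((sin (pi/4))^2)^2) \<noteq> 0" unfolding s4 by (simp add: power2_eq_square)
    then show ?thesis using a b unfolding s4 by auto
  qed
  show False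
    apply (rule no_entire[OF h0])
    using Fz nz unfolding F_def by (auto simp: right_minus_eq)
qed

end
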